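(* There exists a QCQP in $N=2$ variables with $m=2$ constraints such that: Assumptions A and B hold; the quadratic eigenvalue multiplicity is $k=1$; $k\ge\operatorname{affdim}(\{b(\gamma):\gamma\in\mathcal F\})+1$ for every semidefinite face $\mathcal F$ of $\Gamma$; but $\mathrm{Opt}\neq\mathrm{Opt}_{\mathrm{SDP}}$ (and hence $\operatorname{conv}(\mathcal D)\neq\mathcal D_{\mathrm{SDP}}$).
   Context: A QCQP is given by integers $N\ge 1$, $m_I,m_E\ge 0$, $m:=m_I+m_E\ge 1$ and, for $i\in[0,m]$ ($[a,b]=\{a,\dots,b\}$, $[n]=[1,n]$), $q_i(x)=x^\top A_ix+2b_i^\top x+c_i$ with $A_i\in\mathbb S^N$, $b_i\in\mathbb R^N$, $c_i\in\mathbb R$. $\mathrm{Opt}:=\inf\{q_0(x): q_i(x)\le 0\ \forall i\in[m_I],\ q_i(x)=0\ \forall i\in[m_I+1,m]\}$; $\mathcal D:=\{(x,t): q_0(x)\le 2t$ and the same constraints$\}$. With $Q_i=\begin{pmatrix}c_i& b_i^\top\\ b_i& A_i\end{pmatrix}$: $\mathrm{Opt}_{\mathrm{SDP}}:=\inf\{\langle Q_0,Y\rangle: Y=\begin{pmatrix}1&x^\top\\ x& X\end{pmatrix}\succeq 0,\ X\in\mathbb S^N,\ \langle Q_i,Y\rangle\le 0\ \forall i\in[m_I],\ \langle Q_i,Y\rangle=0\ \forall i\in[m_I+1,m]\}$; $\mathcal D_{\mathrm{SDP}}:=\{(x,t):\exists X$ with $Y\succeq0$, $\langle Q_0,Y\rangle\le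 2t$ and the same constraints$\}$. $A(\gamma)=A_0+\sum\gamma_iA_i$, $b(\gamma)=b_0+\sum\gamma_ib_i$, $q(\gamma,x)=q_0(x)+\sum\gamma_iq_i(x)$; $\Gamma:=\{\gamma\in\mathbb R^m: A(\gamma)\succeq0,\ \gamma_i\ge0\ \forall i\in[m_I]\}$. Assumption A: the QCQP feasible set is nonempty and some $\gamma^*$ with $\gamma^*_i\ge0$ ($i\in[m_I]$) has $A(\gamma^* )\succ0$. Assumption B: for every $\hat x$, if $\sup_{\gamma\in\Gamma}q(\gamma,\hat x)$ is finite it is attained. A nonempty face $\mathcal F$ of $\Gamma$ is semidefinite if no $\gamma\in\mathcal F$ has $A(\gamma)\succ0$. The quadratic eigenvalue multiplicity is the largest integer $k$ (with $N=nk$) such that each $A_i=I_k\otimes\mathcal A_i$ for some $\mathcal A_i\in\mathbb S^n$. $\operatorname{affdim}$ is the dimension of the affine hull. *)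

theory Defs
  imports "HOL-Analysis.Analysis" "HOL-Library.Numeral_Type"
begin

text \<open>A QCQP with variable index type 'n (N = CARD('n)) and constraint index type 'm
 (m = CARD('m)).\<close>

definition psd :: "real^'k^'k \<Rightarrow> bool" where
  "psd M \<longleftrightarrow> transpose M = M \<and> (\<forall>v. 0 \<le> v \<bullet> (M *v v))"

definition pd :: "real^'k^'k \<Rightarrow> bool" where
  "pd M \<longleftrightarrow> transpose M = M \<and> (\<forall>v. v \<noteq> 0 \<longrightarrow> 0 < v \<bullet> (M *v v))"

definition qf :: "real^'n^'n \<Rightarrow> real^'n \<Rightarrow> real \<Rightarrow> real^'n \<Rightarrow> real" where
  "qf A b c x = x \<bullet> (A *v x) + 2 * (b \<bullet> x) + c"

definition qcqp_feasible ::
  "('m \<Rightarrow> real^'n^'n) \<Rightarrow> ('m \<Rightarrow> real^'n) \<Rightarrow> ('m \<Rightarrow> real) \<Rightarrow> 'm set \<Rightarrow> (real^'n) set" where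
  "qcqp_feasible A b c I = {x. \<forall>i. (i \<in> I \<longrightarrow> qf (A i) (b i) (c i) x \<le> 0)
                                  \<and> (i \<notin> I \<longrightarrow> qf (A i) (b i) (c i) x = 0)}"

definition Opt where
  "Opt A0 b0 c0 A b c I = Inf ((\<lambda>x. ereal (qf A0 b0 c0 x)) ` qcqp_feasible A b c I)"

definition Dset :: "real^'n^'n \<Rightarrow> real^'n \<Rightarrow> real \<Rightarrow> ('m \<Rightarrow> real^'n^'n) \<Rightarrow> ('m \<Rightarrow> real^'n)
    \<Rightarrow> ('m \<Rightarrow> real) \<Rightarrow> 'm set \<Rightarrow> ((real^'n) \<times> real) set" where
  "Dset A0 b0 c0 A b c I = {(x,t). qf A0 b0 c0 x \<le> 2 * t \<and> x \<in> qcqp_feasible A b c I}"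

text \<open>Block matrices indexed by 'n option: None is the extra first row/column.\<close>
definition Qmat :: "real^'n^'n \<Rightarrow> real^'n \<Rightarrow> real \<Rightarrow> real^('n option)^('n option)" where
  "Qmat A b c = (\<chi> p q. case (p, q) of (None, None) \<Rightarrow> c | (None, Some j) \<Rightarrow> b $ j
      | (Some i, None) \<Rightarrow> b $ i | (Some i, Some j) \<Rightarrow> A $ i $ j)"

definition Ymat :: "real^'n \<Rightarrow> real^'n^'n \<Rightarrow> real^('n option)^('n option)" where
  "Ymat x X = Qmat X x 1"

definition frob :: "real^'k^'k \<Rightarrow> real^'k^'k \<Rightarrow> real" where
  "frob M Y = (\<Sum>p\<in>UNIV. \<Sum>q\<in>UNIV. M $ p $ q * Y $ p $ q)"

definition sdp_feasible ::
  "('m \<Rightarrow> real^'n^'n) \<Rightarrow> ('m \<Rightarrow> real^'n) \<Rightarrow> ('m \<Rightarrow> real) \<Rightarrow> 'm set \<Rightarrow> ((real^'n) \<times> (real^'n^'n)) set" where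
  "sdp_feasible A b c I = {(x,X). transpose X = X \<and> psd (Ymat x X)
      \<and> (\<forall>i. (i \<in> I \<longrightarrow> frob (Qmat (A i) (b i) (c i)) (Ymat x X) \<le> 0)
            \<and> (i \<notin> I \<longrightarrow> frob (Qmat (A i) (b i) (c i)) (Ymat x X) = 0))}"

definition Opt_SDP where
  "Opt_SDP A0 b0 c0 A b c I =
     Inf ((\<lambda>(x,X). ereal (frob (Qmat A0 b0 c0) (Ymat x X))) ` sdp_feasible A b c I)"

definition D_SDP :: "real^'n^'n \<Rightarrow> real^'n \<Rightarrow> real \<Rightarrow> ('m \<Rightarrow> real^'n^'n) \<Rightarrow> ('m \<Rightarrow> real^'n)
    \<Rightarrow> ('m \<Rightarrow> real) \<Rightarrow> 'm set \<Rightarrow> ((real^'n) \<times> real) set" where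
  "D_SDP A0 b0 c0 A b c I = {(x,t). \<exists>X. (x,X) \<in> sdp_feasible A b c I
       \<and> frob (Qmat A0 b0 c0) (Ymat x X) \<le> 2 * t}"

definition Agam :: "real^'n^'n \<Rightarrow> ('m::finite \<Rightarrow> real^'n^'n) \<Rightarrow> real^'m \<Rightarrow> real^'n^'n" where
  "Agam A0 A \<gamma> = A0 + (\<Sum>i\<in>UNIV. \<gamma> $ i *\<^sub>R A i)"

definition bgam :: "real^'n \<Rightarrow> ('m::finite \<Rightarrow> real^'n) \<Rightarrow> real^'m \<Rightarrow> real^'n" where
  "bgam b0 b \<gamma> = b0 + (\<Sum>i\<in>UNIV. \<gamma> $ i *\<^sub>R b i)"

definition qgam where
  "qgam A0 b0 c0 A b c \<gamma> x = qf A0 b0 c0 x + (\<Sum>i\<in>UNIV. \<gamma> $ i * qf (A i) (b i) (c i) x)"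

definition Gamma :: "real^'n^'n \<Rightarrow> ('m::finite \<Rightarrow> real^'n^'n) \<Rightarrow> 'm set \<Rightarrow> (real^'m) set" where
  "Gamma A0 A I = {\<gamma>. psd (Agam A0 A \<gamma>) \<and> (\<forall>i\<in>I. 0 \<le> \<gamma> $ i)}"

definition assumptionA where
  "assumptionA A0 A b c I \<longleftrightarrow> qcqp_feasible A b c I \<noteq> {}
     \<and> (\<exists>\<gamma>. (\<forall>i\<in>I. 0 \<le> \<gamma> $ i) \<and> pd (Agam A0 A \<gamma>))"

definition assumptionB where
  "assumptionB A0 b0 c0 A b c I \<longleftrightarrow> (\<forall>x. Gamma A0 A I \<noteq> {}
      \<and> bdd_above ((\<lambda>\<gamma>. qgam A0 b0 c0 A b c \<gamma> x) ` Gamma A0 A I)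
      \<longrightarrow> (\<exists>\<gamma>\<in>Gamma A0 A I. qgam A0 b0 c0 A b c \<gamma> x
             = (SUP g\<in>Gamma A0 A I. qgam A0 b0 c0 A b c g x)))"

definition semidefinite_face where
  "semidefinite_face A0 A I F \<longleftrightarrow> F \<noteq> {} \<and> F face_of Gamma A0 A I
      \<and> (\<forall>\<gamma>\<in>F. \<not> pd (Agam A0 A \<gamma>))"

text \<open>Coordinates are ordered via the canonical enumeration of the index type:
 coordinate r (0-based) is enum ! r.  M = I_k \<otimes> Mc means entry (r,s) equals
 Mc (r mod n) (s mod n) if r div n = s div n and 0 otherwise, where n = N div k.\<close>
definition is_kron_identity :: "nat \<Rightarrow> ((real, 'n::enum) vec, 'n) vec \<Rightarrow> bool" where
  "is_kron_identity k M \<longleftrightarrow> (let N = CARD('n); n = N div k in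
     \<exists>Mc :: nat \<Rightarrow> nat \<Rightarrow> real. (\<forall>r<n. \<forall>s<n. Mc r s = Mc s r) \<and>
       (\<forall>r<N. \<forall>s<N. M $ (Enum.enum ! r) $ (Enum.enum ! s)
            = (if r div n = s div n then Mc (r mod n) (s mod n) else 0)))"

definition mult_ok :: "nat \<Rightarrow> ((real, 'n::enum) vec, 'n) vec \<Rightarrow> ('m \<Rightarrow> ((real, 'n) vec, 'n) vec) \<Rightarrow> bool" where
  "mult_ok k A0 A \<longleftrightarrow> k \<ge> 1 \<and> k dvd CARD('n) \<and> is_kron_identity k A0
      \<and> (\<forall>i. is_kron_identity k (A i))"

definition eig_multiplicity :: "((real, 'n::enum) vec, 'n) vec \<Rightarrow> ('m \<Rightarrow> ((real, 'n) vec, 'n) vec) \<Rightarrow> nat" where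
  "eig_multiplicity A0 A = (GREATEST k. mult_ok k A0 A)"

end

theory Submission
  imports Defs
begin

lemma qform2: "(v::real^2) \<bullet> (M *v v) = M$1$1* v$1* v$1 + (M$1$2 + M$2$1)* v$1* v$2 + M$2$2* v$2* v$2"
  by (simp add: inner_vec_def matrix_vector_mult_def sum_2 algebra_simps)

definition "MA0 = (mat 1 :: real^2^2)"
definition "MA1 = (\<chi> i j. if i = j then (if i = 1 then 1 else -1) else 0 :: real^2^2)"
definition "MA2 = (\<chi> i j. if i = j then 0 else 1 :: real^2^2)"
definition "MA i = (if i = (1::2) then MA1 else MA2)"
definition "Mb (i::2) = (0::real^2)"
definition "Mc (i::2) = (if i = 1 then -1 else 0::real)"
definition "Mb0 = (\<chi> i. if i = 1 then 0 else 1 :: real^2)"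

lemma ne12: "(1::2) \<noteq> 2" by simp

lemma Agam_ent: "Agam MA0 MA g $1$1 = 1 + g$1" "Agam MA0 MA g $1$2 = g$2"
  "Agam MA0 MA g $2$1 = g$2" "Agam MA0 MA g $2$2 = 1 - g$1"
  by (simp_all add: Agam_def sum_2 MA_def MA0_def MA1_def MA2_def mat_def)

lemma Agam_sym: "transpose (Agam MA0 MA g) = Agam MA0 MA g"
  unfolding transpose_def by (simp add: vec_eq_iff forall_2 Agam_ent)

lemma qgam_form: "qgam MA0 Mb0 0 MA Mb Mc g x = x$1* x$1 + x$2* x$2 + 2* x$2
   + g$1 * (x$1* x$1 - x$2* x$2 - 1) + g$2 * (2* x$1* x$2)"
  by (simp add: qgam_def qf_def sum_2 MA_def MA0_def MA1_def MA2_def mat_def Mb_def Mc_def Mb0_def inner_vec_def matrix_vector_mult_def algebra_simps)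

lemma psd_iff: "psd (Agam MA0 MA g) \<longleftrightarrow> g$1*g$1 + g$2*g$2 \<le> 1"
proof
  assume h: "psd (Agam MA0 MA g)"
  define v1 :: "real^2" where "v1 = (\<chi> i. if i = 1 then 1 - g$1 else - g$2)"
  define v2 :: "real^2" where "v2 = (\<chi> i. if i = 1 then g$2 else - (1 + g$1))"
  have "v1 \<bullet> (Agam MA0 MA g *v v1) = (1 - g$1) * (1 - (g$1*g$1 + g$2*g$2))"
    by (simp add: qform2 Agam_ent v1_def algebra_simps)
  moreover have "v2 \<bullet> (Agam MA0 MA g *v v2) = (1 + g$1) * (1 - (g$1*g$1 + g$2*g$2))"
    by (simp add: qform2 Agam_ent v2_def algebra_simps)
  ultimately have "0 \<le> (1 - g$1) * (1 - (g$1*g$1 + g$2*g$2))" "0 \<le> (1 + g$1) * (1 - (g$1*g$1 + g$2*g$2))"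
    using h unfolding psd_def by metis+
  then have "0 \<le> 2 * (1 - (g$1*g$1 + g$2*g$2))" by (simp add: algebra_simps)
  then show "g$1*g$1 + g$2*g$2 \<le> 1" by simp
next
  assume h: "g$1*g$1 + g$2*g$2 \<le> 1"
  have "0 \<le> v \<bullet> (Agam MA0 MA g *v v)" for v
  proof -
    define p where "p = v$1* v$1 - v$2* v$2"
    define q where "q = 2* v$1* v$2"
    define S where "S = v$1* v$1 + v$2* v$2"
    have S0: "0 \<le> S" unfolding S_def by simp
    have e: "v \<bullet> (Agam MA0 MA g *v v) = S + (g$1*p + g$2*q)"
      by (simp add: qform2 Agam_ent p_def q_def S_def algebra_simps)
    have pq: "p*p + q*q = S*S" by (simp add: p_def q_def S_def algebra_simps)
    have "(g$1*p + g$2*q)^2 = (g$1*g$1 + g$2*g$2)*(p*p+q*q) - (g$1*q - g$2*p)^2"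
      by (simp add: power2_eq_square algebra_simps)
    also have "\<dots> \<le> (g$1*g$1 + g$2*g$2)*(p*p+q*q)" by simp
    also have "\<dots> \<le> 1 * (p*p+q*q)" by (rule mult_right_mono[OF h]) simp
    also have "\<dots> = S^2" using pq by (simp add: power2_eq_square)
    finally have "\<bar>g$1*p + g$2*q\<bar> \<le> S" using S0 by (metis abs_le_square_iff abs_of_nonneg)
    then show ?thesis using e by linarith
  qed
  then show "psd (Agam MA0 MA g)" unfolding psd_def using Agam_sym by blast
qed

lemma Gamma_eq: "Gamma MA0 MA {} = cball 0 1"
proof -
  have "norm g \<le> 1 \<longleftrightarrow> g$1*g$1 + g$2*g$2 \<le> 1" for g :: "real^2"
  proof -
    have "norm g ^ 2 = g$1*g$1 + g$2*g$2"
      by (simp add: power2_norm_eq_inner inner_vec_def sum_2)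
    moreover have "norm g \<le> 1 \<longleftrightarrow> norm g ^ 2 \<le> 1"
      by (simp add: power_le_one_iff)
    ultimately show ?thesis by simp
  qed
  then show ?thesis unfolding Gamma_def psd_iff set_eq_iff mem_cball dist_0_norm by simp
qed

lemma qf0: "qf MA0 Mb0 0 x = x$1*x$1 + x$2*x$2 + 2*x$2"
  by (simp add: qf_def sum_2 MA0_def mat_def Mb0_def inner_vec_def matrix_vector_mult_def algebra_simps)
lemma qf1: "qf (MA 1) (Mb 1) (Mc 1) x = x$1*x$1 - x$2*x$2 - 1"
  by (simp add: qf_def sum_2 MA_def MA1_def Mb_def Mc_def inner_vec_def matrix_vector_mult_def algebra_simps)
lemma qf2: "qf (MA 2) (Mb 2) (Mc 2) x = 2*x$1*x$2"
  by (simp add: qf_def sum_2 MA_def MA2_def Mb_def Mc_def inner_vec_def matrix_vector_mult_def algebra_simps)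

lemma feas_val: assumes "x \<in> qcqp_feasible MA Mb Mc {}" shows "qf MA0 Mb0 0 x = 1"
proof -
  have a: "x$1*x$1 - x$2*x$2 - 1 = 0" and b: "2*x$1*x$2 = 0"
    using assms unfolding qcqp_feasible_def by (auto simp: qf1[symmetric] qf2[symmetric])
  have "x$2 = 0"
  proof (rule ccontr)
    assume "x$2 \<noteq> 0"
    then have "x$1 = 0" using b by simp
    moreover have "0 \<le> x$2*x$2" by simp
    moreover have "x$2*x$2 = -1" using a \<open>x$1 = 0\<close> by simp
    ultimately show False by linarith
  qed
  then show ?thesis using a by (simp add: qf0)
qed

lemma assB: "assumptionB MA0 Mb0 0 MA Mb Mc {}"
  unfolding assumptionB_def
proof (intro allI impI)
  fix x :: "real^2"
  let ?f = "\<lambda>g. qgam MA0 Mb0 0 MA Mb Mc g x"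
  have c: "continuous_on (cball 0 1) ?f"
    unfolding qgam_form by (intro continuous_intros)
  obtain s where s: "s \<in> cball 0 1" "\<forall>t\<in>cball 0 1. ?f t \<le> ?f s"
    using continuous_attains_sup[OF compact_cball _ c] by auto
  have "Sup (?f ` cball 0 1) = ?f s"
    by (rule cSup_eq_maximum) (use s in auto)
  then show "\<exists>g\<in>Gamma MA0 MA {}. ?f g = (SUP g\<in>Gamma MA0 MA {}. ?f g)"
    unfolding Gamma_eq using s by auto
qed

lemma sum_opt2: "sum f (UNIV :: 2 option set) = f None + f (Some 1) + f (Some 2)"
proof -
  have "sum f (UNIV :: 2 option set) = f None + sum f (range Some)"
    unfolding UNIV_option_conv by (subst sum.insert) auto
  also have "sum f (range Some) = sum (f \<circ> Some) (UNIV :: 2 set)"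
    by (rule sum.reindex) simp
  finally show ?thesis by (simp add: sum_2 add.assoc)
qed

lemma forall_opt2: "(\<forall>p::2 option. P p) \<longleftrightarrow> P None \<and> P (Some 1) \<and> P (Some 2)"
  by (metis exhaust_2 option.exhaust)

definition "xs = (\<chi> i. if i = 1 then 0 else - 1/2 :: real^2)"
definition "Xs = (\<chi> i j. if i = j then (if i = 1 then 5/4 else 1/4) else 0 :: real^2^2)"

lemma Ysym: "transpose (Ymat xs Xs) = Ymat xs Xs"
  unfolding transpose_def by (simp add: vec_eq_iff forall_opt2 Ymat_def Qmat_def xs_def Xs_def)

lemma Ypsd: "psd (Ymat xs Xs)"
  unfolding psd_def
proof (intro conjI Ysym allI)
  fix v :: "real^(2 option)"
  have "v \<bullet> (Ymat xs Xs *v v) = (v$None - v$Some 2/2)^2 + 5/4 * (v$Some 1)^2"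
    by (simp add: inner_vec_def matrix_vector_mult_def sum_opt2 Ymat_def Qmat_def xs_def Xs_def
        power2_eq_square algebra_simps)
  then show "0 \<le> v \<bullet> (Ymat xs Xs *v v)" by simp
qed

lemma frob_opt2: "frob M Y = (\<Sum>p\<in>UNIV. \<Sum>q\<in>UNIV. M $ p $ q * Y $ p $ q)"
  by (simp add: frob_def)

lemma sdp_pt: "(xs, Xs) \<in> sdp_feasible MA Mb Mc {}"
  unfolding sdp_feasible_def
proof (clarsimp, intro conjI Ypsd allI)
  show "transpose Xs = Xs" unfolding transpose_def by (simp add: vec_eq_iff forall_2 Xs_def)
  fix i :: 2
  show "frob (Qmat (MA i) (Mb i) (Mc i)) (Ymat xs Xs) = 0"
    using exhaust_2[of i]
    by (auto simp: frob_def sum_opt2 Ymat_def Qmat_def xs_def Xs_def MA_def MA1_def MA2_def Mb_def Mc_def)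
qed

lemma sdp_val: "frob (Qmat MA0 Mb0 0) (Ymat xs Xs) = 1/2"
  by (simp add: frob_def sum_opt2 Ymat_def Qmat_def xs_def Xs_def MA0_def mat_def Mb0_def)

lemma kron1: assumes "transpose M = M" shows "is_kron_identity 1 (M::real^2^2)"
proof -
  have sym: "M $ i $ j = M $ j $ i" for i j
  proof -
    have "transpose M $ j $ i = M $ j $ i" using assms by simp
    then show ?thesis by (simp add: transpose_def)
  qed
  show ?thesis
    unfolding is_kron_identity_def Let_def
    by (rule exI[of _ "\<lambda>r s. M $ (Enum.enum ! r) $ (Enum.enum ! s)"]) (simp add: sym)
qed

lemma enum2: "(Enum.enum ! 0 :: 2) \<noteq> Enum.enum ! 1"
proof -
  have d: "distinct (Enum.enum :: 2 list)" by (rule enum_distinct)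
  have "card (set (Enum.enum :: 2 list)) = length (Enum.enum :: 2 list)" by (rule distinct_card[OF d])
  then have "length (Enum.enum :: 2 list) = 2" by (simp add: UNIV_enum[symmetric])
  then show ?thesis using d by (simp add: nth_eq_iff_index_eq)
qed

lemma c2: "CARD(2) = 2" by simp

lemma not_kron2: "\<not> is_kron_identity 2 MA1"
proof
  assume "is_kron_identity 2 MA1"
  then obtain Mc :: "nat \<Rightarrow> nat \<Rightarrow> real" where
    h: "\<forall>r<CARD(2). \<forall>s<CARD(2). MA1 $ (Enum.enum ! r) $ (Enum.enum ! s) = (if r div (CARD(2) div 2) = s div (CARD(2) div 2) then Mc (r mod (CARD(2) div 2)) (s mod (CARD(2) div 2)) else 0)"
    unfolding is_kron_identity_def Let_def by blast
  have "MA1 $ (Enum.enum ! 0) $ (Enum.enum ! 0) = MA1 $ (Enum.enum ! 1) $ (Enum.enum ! 1)"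
    using h[rule_format, of 0 0] h[rule_format, of 1 1] by (simp add: c2)
  moreover have "MA1 $ i $ i = (if i = 1 then 1 else -1)" for i :: 2 by (simp add: MA1_def)
  ultimately show False using enum2 exhaust_2[of "Enum.enum ! 0 :: 2"] exhaust_2[of "Enum.enum ! 1 :: 2"]
    by (metis one_neq_neg_one)
qed

lemma mult1: "mult_ok 1 MA0 MA"
proof -
  have "transpose MA0 = MA0" "transpose MA1 = MA1" "transpose MA2 = MA2"
    by (simp_all add: MA0_def MA1_def MA2_def transpose_def vec_eq_iff forall_2 mat_def)
  then show ?thesis unfolding mult_ok_def using kron1 by (auto simp: MA_def)
qed

lemma eigm: "eig_multiplicity MA0 MA = 1"
  unfolding eig_multiplicity_def
proof (rule Greatest_equality)
  show "mult_ok 1 MA0 MA" by (rule mult1)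
next
  fix k assume "mult_ok k MA0 MA"
  then have "k \<ge> 1" "k dvd 2" "is_kron_identity k (MA 1)" unfolding mult_ok_def by auto
  then have "k \<le> 2" using dvd_imp_le by auto
  moreover have "k \<noteq> 2" using not_kron2 \<open>is_kron_identity k (MA 1)\<close> by (auto simp: MA_def)
  ultimately show "k \<le> 1" by linarith
qed

lemma assA: "assumptionA MA0 MA Mb Mc {}"
  unfolding assumptionA_def
proof (intro conjI)
  let ?x = "(\<chi> i. if i = 1 then 1 else 0) :: real^2"
  have "?x \<in> qcqp_feasible MA Mb Mc {}"
    unfolding qcqp_feasible_def by (simp add: forall_2 qf1 qf2)
  then show "qcqp_feasible MA Mb Mc {} \<noteq> {}" by blast
  have "pd (Agam MA0 MA 0)"
    unfolding pd_def
  proof (intro conjI Agam_sym allI impI)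
    fix v :: "real^2" assume "v \<noteq> 0"
    then have "v$1 \<noteq> 0 \<or> v$2 \<noteq> 0" by (auto simp: vec_eq_iff forall_2)
    then have "0 < v$1* v$1 + v$2* v$2"
      by (metis add_pos_nonneg add_nonneg_pos not_real_square_gt_zero zero_le_square)
    then show "0 < v \<bullet> (Agam MA0 MA 0 *v v)" by (simp add: qform2 Agam_ent)
  qed
  then show "\<exists>\<gamma>. (\<forall>i\<in>{}. 0 \<le> \<gamma> $ i) \<and> pd (Agam MA0 MA \<gamma>)" by blast
qed

lemma bgam_const: "bgam Mb0 Mb g = Mb0"
  by (simp add: bgam_def Mb_def)

lemma faces: "semidefinite_face MA0 MA {} F \<Longrightarrow>
           int (eig_multiplicity MA0 MA) \<ge> aff_dim (bgam Mb0 Mb ` F) + 1"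
proof -
  assume "semidefinite_face MA0 MA {} F"
  then have "F \<noteq> {}" by (simp add: semidefinite_face_def)
  then have "bgam Mb0 Mb ` F = {Mb0}" by (auto simp: bgam_const)
  then show ?thesis by (simp add: eigm)
qed

lemma Opt_ge: "ereal 1 \<le> Opt MA0 Mb0 0 MA Mb Mc {}"
  unfolding Opt_def by (rule Inf_greatest) (auto simp: feas_val)

lemma OptSDP_le: "Opt_SDP MA0 Mb0 0 MA Mb Mc {} \<le> ereal (1/2)"
proof -
  have "ereal (1/2) \<in> (\<lambda>(x,X). ereal (frob (Qmat MA0 Mb0 0) (Ymat x X))) ` sdp_feasible MA Mb Mc {}"
    using sdp_pt sdp_val by (auto intro!: image_eqI[where x="(xs,Xs)"])
  then show ?thesis unfolding Opt_SDP_def by (rule Inf_lower)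
qed

lemma hull_ne: "convex hull (Dset MA0 Mb0 0 MA Mb Mc {}) \<noteq> D_SDP MA0 Mb0 0 MA Mb Mc {}"
proof
  let ?H = "{p :: (real^2) \<times> real. 1 \<le> 2 * snd p}"
  have cH: "convex ?H"
  proof (rule convexI)
    fix a b :: "(real^2) \<times> real" and u v :: real
    assume "a \<in> ?H" "b \<in> ?H" "0 \<le> u" "0 \<le> v" "u + v = 1"
    then have "1 \<le> 2 * snd a" "1 \<le> 2 * snd b" by auto
    then have "u * 1 + v * 1 \<le> u * (2 * snd a) + v * (2 * snd b)"
      using \<open>0 \<le> u\<close> \<open>0 \<le> v\<close> by (intro add_mono mult_left_mono) auto
    then have "1 \<le> 2 * (u * snd a + v * snd b)" using \<open>u + v = 1\<close> by (simp add: algebra_simps)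
    then show "u *\<^sub>R a + v *\<^sub>R b \<in> ?H" by simp
  qed
  have "Dset MA0 Mb0 0 MA Mb Mc {} \<subseteq> ?H"
    unfolding Dset_def using feas_val by auto
  then have sub: "convex hull (Dset MA0 Mb0 0 MA Mb Mc {}) \<subseteq> ?H"
    using cH by (rule hull_minimal)
  assume eq: "convex hull (Dset MA0 Mb0 0 MA Mb Mc {}) = D_SDP MA0 Mb0 0 MA Mb Mc {}"
  have "(xs, 1/4) \<in> D_SDP MA0 Mb0 0 MA Mb Mc {}"
    unfolding D_SDP_def using sdp_pt sdp_val by auto
  then have "(xs, 1/4::real) \<in> ?H" using eq sub by blast
  then show False by simp
qed

theorem mainTheorem16:
  shows "\<exists>(A0 :: real^2^2) (b0 :: real^2) (c0 :: real)
           (A :: 2 \<Rightarrow> real^2^2) (b :: 2 \<Rightarrow> real^2) (c :: 2 \<Rightarrow> real) (I :: 2 set).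
    transpose A0 = A0 \<and> (\<forall>i. transpose (A i) = A i)
    \<and> assumptionA A0 A b c I
    \<and> assumptionB A0 b0 c0 A b c I
    \<and> eig_multiplicity A0 A = 1
    \<and> (\<forall>F. semidefinite_face A0 A I F \<longrightarrow>
           int (eig_multiplicity A0 A) \<ge> aff_dim (bgam b0 b ` F) + 1)
    \<and> Opt A0 b0 c0 A b c I \<noteq> Opt_SDP A0 b0 c0 A b c I
    \<and> convex hull (Dset A0 b0 c0 A b c I) \<noteq> D_SDP A0 b0 c0 A b c I"
proof (intro exI conjI allI impI)
  have s: "transpose MA0 = MA0" "transpose MA1 = MA1" "transpose MA2 = MA2"
    by (simp_all add: MA0_def MA1_def MA2_def transpose_def vec_eq_iff forall_2 mat_def)
  show "transpose MA0 = MA0" by (rule s(1))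
  show "transpose (MA i) = MA i" for i using s by (simp add: MA_def)
  show "assumptionA MA0 MA Mb Mc {}" by (rule assA)
  show "assumptionB MA0 Mb0 0 MA Mb Mc {}" by (rule assB)
  show "eig_multiplicity MA0 MA = 1" by (rule eigm)
  show "int (eig_multiplicity MA0 MA) \<ge> aff_dim (bgam Mb0 Mb ` F) + 1"
    if "semidefinite_face MA0 MA {} F" for F using faces that by blast
  show "Opt MA0 Mb0 0 MA Mb Mc {} \<noteq> Opt_SDP MA0 Mb0 0 MA Mb Mc {}"
  proof
    assume "Opt MA0 Mb0 0 MA Mb Mc {} = Opt_SDP MA0 Mb0 0 MA Mb Mc {}"
    then have "ereal 1 \<le> ereal (1/2)" using Opt_ge OptSDP_le by (metis order_trans)
    then show False by simp
  qed
  show "convex hull (Dset MA0 Mb0 0 MA Mb Mc {}) \<noteq> D_SDP MA0 Mb0 0 MA Mb Mc {}" by (rule hull_ne)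
qed

end
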